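(* Let $G_1=(V,D_1)$ and $G_2=(V,D_2)$ be distinct simple directed graphs on the same node set $V$. Suppose they have the same out-degree sequence, meaning $|\mathrm{ch}_1(v)|=|\mathrm{ch}_2(v)|$ for every $v\in V$, and that at least one of them is acyclic. Then $G_1$ and $G_2$ have different Jacobian matroids.
   Context: A directed graph $G=(V,D)$ has edge set $D\subseteq V\times V$ of ordered pairs $(i,j)$, $i\neq j$. It is simple if $(i,j)$ and $(j,i)$ are never both in $D$. $\mathrm{ch}_k(v)$ is the set of children of $v$ in $G_k$. For $G=(V,D)$ let $\Lambda$ be the $V\times V$ matrix with indeterminate entries $\lambda_{ij}$ for $(i,j)\in D$ and zeros elsewhere, and $s$ a further indeterminate. Let $\psi_G(\Lambda,s)=s(I-\Lambda)(I-\Lambda)^T=K$. The transposed Jacobian $J(\psi_G)$ has rows indexed by $\{\lambda_{kl}:(k,l)\in D\}\cup\{s\}$ and columns indexed by $K_{ij}$, $i\le j$, with entries $\partial K_{ij}/\partial\theta$. The Jacobian matroid of $G$ is the matroid on the columns in which a set is independent iff its columns are linearly independent over $\mathbb{R}(\lambda,s)$. *)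

theory Defs
  imports Complex_Main "HOL-Library.Poly_Mapping" "HOL-Library.Option_ord"
    "HOL-Library.Product_Lexorder" "HOL-Computational_Algebra.Fraction_Field"
begin

text \<open>Indeterminates: Some (k,l) stands for lambda_kl, None stands for s.\<close>
type_synonym 'v indet = "('v \<times> 'v) option"

type_synonym 'v mpoly = "('v indet \<Rightarrow>\<^sub>0 nat) \<Rightarrow>\<^sub>0 real"

definition mvar :: "'v indet \<Rightarrow> 'v mpoly" where
  "mvar x = Poly_Mapping.single (Poly_Mapping.single x 1) 1"

definition mpderiv :: "'v indet \<Rightarrow> 'v mpoly \<Rightarrow> 'v mpoly" where
  "mpderiv x p = (\<Sum>m\<in>Poly_Mapping.keys p.
      Poly_Mapping.single (m - Poly_Mapping.single x 1)
        (Poly_Mapping.lookup p m * of_nat (Poly_Mapping.lookup m x)))"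

definition simple_digraph :: "'v set \<Rightarrow> ('v \<times> 'v) set \<Rightarrow> bool" where
  "simple_digraph V D \<longleftrightarrow> D \<subseteq> V \<times> V \<and> (\<forall>i j. (i,j) \<in> D \<longrightarrow> i \<noteq> j)
     \<and> (\<forall>i j. (i,j) \<in> D \<longrightarrow> (j,i) \<notin> D)"

definition children :: "('v \<times> 'v) set \<Rightarrow> 'v \<Rightarrow> 'v set" where
  "children D v = {w. (v,w) \<in> D}"

definition Lam :: "('v \<times> 'v) set \<Rightarrow> 'v \<Rightarrow> 'v \<Rightarrow> 'v mpoly" where
  "Lam D i j = (if (i,j) \<in> D then mvar (Some (i,j)) else 0)"

definition Id_entry :: "'v \<Rightarrow> 'v \<Rightarrow> 'v mpoly" where
  "Id_entry i j = (if i = j then 1 else 0)"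

definition Kentry :: "'v set \<Rightarrow> ('v \<times> 'v) set \<Rightarrow> 'v \<Rightarrow> 'v \<Rightarrow> 'v mpoly" where
  "Kentry V D i j = mvar None *
     (\<Sum>k\<in>V. (Id_entry i k - Lam D i k) * (Id_entry j k - Lam D j k))"

text \<open>Row indices (parameters theta) and column indices (K_ij, i \<le> j) of J(psi_G).\<close>
definition jac_rows :: "('v \<times> 'v) set \<Rightarrow> 'v indet set" where
  "jac_rows D = Some ` D \<union> {None}"

definition jac_cols :: "'v::linorder set \<Rightarrow> ('v \<times> 'v) set" where
  "jac_cols V = {(i,j). i \<in> V \<and> j \<in> V \<and> i \<le> j}"

text \<open>Transposed Jacobian entry, viewed in the field of rational functions R(lambda,s).\<close>
definition jac :: "'v::linorder set \<Rightarrow> ('v \<times> 'v) set \<Rightarrow> 'v indet \<Rightarrow> 'v \<times> 'v \<Rightarrow> 'v mpoly fract" where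
  "jac V D \<theta> c = Fract (mpderiv \<theta> (Kentry V D (fst c) (snd c))) 1"

definition jac_indep :: "'v::linorder set \<Rightarrow> ('v \<times> 'v) set \<Rightarrow> ('v \<times> 'v) set \<Rightarrow> bool" where
  "jac_indep V D C \<longleftrightarrow> C \<subseteq> jac_cols V \<and>
     (\<forall>a :: 'v \<times> 'v \<Rightarrow> 'v mpoly fract.
        (\<forall>\<theta>\<in>jac_rows D. (\<Sum>c\<in>C. a c * jac V D \<theta> c) = 0) \<longrightarrow> (\<forall>c\<in>C. a c = 0))"

end

theory Submission
  imports Defs
begin

lemma mpderiv_superset:
  assumes "finite S" "Poly_Mapping.keys p \<subseteq> S"
  shows "mpderiv x p = (\<Sum>m\<in>S. Poly_Mapping.single (m - Poly_Mapping.single x 1)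
        (Poly_Mapping.lookup p m * of_nat (Poly_Mapping.lookup m x)))"
  unfolding mpderiv_def
  by (rule sum.mono_neutral_left) (auto simp: assms in_keys_iff)

lemma mpderiv_add: "mpderiv x (p + q) = mpderiv x p + mpderiv x q"
proof -
  let ?S = "Poly_Mapping.keys p \<union> Poly_Mapping.keys q"
  have f: "finite ?S" by simp
  have "mpderiv x (p + q) = (\<Sum>m\<in>?S. Poly_Mapping.single (m - Poly_Mapping.single x 1)
        (Poly_Mapping.lookup (p+q) m * of_nat (Poly_Mapping.lookup m x)))"
    by (rule mpderiv_superset[OF f keys_add])
  also have "\<dots> = (\<Sum>m\<in>?S. Poly_Mapping.single (m - Poly_Mapping.single x 1)
        (Poly_Mapping.lookup p m * of_nat (Poly_Mapping.lookup m x))) +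
      (\<Sum>m\<in>?S. Poly_Mapping.single (m - Poly_Mapping.single x 1)
        (Poly_Mapping.lookup q m * of_nat (Poly_Mapping.lookup m x)))"
    by (simp add: lookup_add distrib_right single_add sum.distrib)
  also have "\<dots> = mpderiv x p + mpderiv x q"
    by (simp add: mpderiv_superset[OF f])
  finally show ?thesis .
qed

lemma mpderiv_uminus: "mpderiv x (- p) = - mpderiv x p"
  unfolding mpderiv_def keys_minus lookup_uminus mult_minus_left single_uminus sum_negf ..

lemma mpderiv_diff: "mpderiv x (p - q) = mpderiv x p - mpderiv x q"
  by (simp only: diff_conv_add_uminus mpderiv_add mpderiv_uminus)

lemma mpderiv_zero [simp]: "mpderiv x 0 = 0"
  unfolding mpderiv_def by simp

lemma mpderiv_sum: "finite I \<Longrightarrow> mpderiv x (\<Sum>i\<in>I. f i) = (\<Sum>i\<in>I. mpderiv x (f i))"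
  by (induction I rule: finite_induct) (simp_all add: mpderiv_add)

lemma mpderiv_single:
  "mpderiv x (Poly_Mapping.single m a) =
     Poly_Mapping.single (m - Poly_Mapping.single x 1) (a * of_nat (Poly_Mapping.lookup m x))"
  by (subst mpderiv_superset[where S="{m}"]) auto

lemma mpoly_expand:
  "(p::'v mpoly) = (\<Sum>m\<in>Poly_Mapping.keys p. Poly_Mapping.single m (Poly_Mapping.lookup p m))"
proof (rule poly_mapping_eqI)
  fix k
  show "Poly_Mapping.lookup p k = Poly_Mapping.lookup (\<Sum>m\<in>Poly_Mapping.keys p. Poly_Mapping.single m (Poly_Mapping.lookup p m)) k"
    by (simp add: lookup_sum lookup_single when_def in_keys_iff)
qed

lemma shift_eq:
  fixes m n :: "'v indet \<Rightarrow>\<^sub>0 nat"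
  shows "Poly_Mapping.single (m - Poly_Mapping.single x 1 + n) (c * of_nat (Poly_Mapping.lookup m x) :: real)
       = Poly_Mapping.single (m + n - Poly_Mapping.single x 1) (c * of_nat (Poly_Mapping.lookup m x))"
proof (cases "Poly_Mapping.lookup m x = 0")
  case True then show ?thesis by simp
next
  case False
  have "m - Poly_Mapping.single x 1 + n = m + n - Poly_Mapping.single x 1"
    by (rule poly_mapping_eqI) (use False in \<open>auto simp: lookup_add lookup_minus lookup_single when_def\<close>)
  then show ?thesis by simp
qed

lemma mpderiv_mult_single:
  "mpderiv x (Poly_Mapping.single m a * Poly_Mapping.single n b :: 'v mpoly) =
   mpderiv x (Poly_Mapping.single m a) * Poly_Mapping.single n b +
   Poly_Mapping.single m a * mpderiv x (Poly_Mapping.single n b)"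
proof -
  have 1: "mpderiv x (Poly_Mapping.single m a) * Poly_Mapping.single n b =
     Poly_Mapping.single (m + n - Poly_Mapping.single x 1) ((a*b) * of_nat (Poly_Mapping.lookup m x))"
    using shift_eq[of m x n "a*b"]
    by (simp add: mpderiv_single mult_single algebra_simps)
  have 2: "Poly_Mapping.single m a * mpderiv x (Poly_Mapping.single n b) =
     Poly_Mapping.single (m + n - Poly_Mapping.single x 1) ((a*b) * of_nat (Poly_Mapping.lookup n x))"
    using shift_eq[of n x m "a*b"]
    by (simp add: mpderiv_single mult_single algebra_simps)
  have 3: "mpderiv x (Poly_Mapping.single m a * Poly_Mapping.single n b :: 'v mpoly) =
     Poly_Mapping.single (m + n - Poly_Mapping.single x 1) ((a*b) * of_nat (Poly_Mapping.lookup m x)) +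
     Poly_Mapping.single (m + n - Poly_Mapping.single x 1) ((a*b) * of_nat (Poly_Mapping.lookup n x))"
    by (simp add: mpderiv_single mult_single lookup_add distrib_left single_add)
  show ?thesis
    by (simp only: 1 2 3)
qed

lemma mpderiv_mult:
  "mpderiv x (p * q :: 'v mpoly) = mpderiv x p * q + p * mpderiv x q"
proof -
  let ?P = "Poly_Mapping.keys p" and ?Q = "Poly_Mapping.keys q"
  let ?sp = "\<lambda>m. Poly_Mapping.single m (Poly_Mapping.lookup p m)"
  let ?sq = "\<lambda>m. Poly_Mapping.single m (Poly_Mapping.lookup q m)"
  have ep: "p = (\<Sum>m\<in>?P. ?sp m)" by (rule mpoly_expand)
  have eq: "q = (\<Sum>m\<in>?Q. ?sq m)" by (rule mpoly_expand)
  have "p * q = (\<Sum>m\<in>?P. \<Sum>n\<in>?Q. ?sp m * ?sq n)"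
    by (subst ep, subst eq) (simp add: sum_product)
  then have "mpderiv x (p * q) = (\<Sum>m\<in>?P. \<Sum>n\<in>?Q. mpderiv x (?sp m) * ?sq n + ?sp m * mpderiv x (?sq n))"
    by (simp add: mpderiv_sum mpderiv_mult_single)
  also have "\<dots> = (\<Sum>m\<in>?P. mpderiv x (?sp m)) * (\<Sum>n\<in>?Q. ?sq n) + (\<Sum>m\<in>?P. ?sp m) * (\<Sum>n\<in>?Q. mpderiv x (?sq n))"
    by (simp add: sum.distrib sum_product)
  also have "\<dots> = mpderiv x p * q + p * mpderiv x q"
    by (subst (5) ep, subst (2) eq, subst (2) ep, subst (3) eq) (simp add: mpderiv_sum)
  finally show ?thesis .
qed

lemma Fract_zero_iff: "Fract (p::'a::idom) 1 = 0 \<longleftrightarrow> p = 0"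
  by (simp add: Zero_fract_def eq_fract)

lemma mvar_nz: "mvar x \<noteq> (0 :: 'v mpoly)"
proof
  assume "mvar x = (0 :: 'v mpoly)"
  then have "Poly_Mapping.lookup (mvar x :: 'v mpoly) (Poly_Mapping.single x 1) = 0" by simp
  then show False by (simp add: mvar_def)
qed

lemma mpderiv_mvar: "mpderiv x (mvar y :: 'v mpoly) = (if x = y then 1 else 0)"
  by (auto simp: mvar_def mpderiv_single lookup_single when_def)

lemma mpderiv_one: "mpderiv x (1 :: 'v mpoly) = 0"
proof -
  have "mpderiv x (1::'v mpoly) = mpderiv x (Poly_Mapping.single 0 1)" by simp
  also have "\<dots> = 0" unfolding mpderiv_single by simp
  finally show ?thesis .
qed

lemma mpderiv_Id: "mpderiv x (Id_entry i j :: 'v mpoly) = 0"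
  by (simp add: Id_entry_def mpderiv_one)

lemma mpderiv_Lam: "mpderiv x (Lam D i j :: 'v mpoly) = (if (i,j) \<in> D \<and> x = Some (i,j) then 1 else 0)"
  by (auto simp: Lam_def mpderiv_mvar)

lemma mpderiv_Kentry_None:
  assumes "finite V"
  shows "mpderiv None (Kentry V D c d :: 'v mpoly) =
    (\<Sum>k\<in>V. (Id_entry c k - Lam D c k) * (Id_entry d k - Lam D d k))"
  unfolding Kentry_def
  by (simp add: mpderiv_mult mpderiv_mvar mpderiv_sum[OF assms] mpderiv_diff mpderiv_Id mpderiv_Lam)

lemma sum_if_eq:
  assumes "finite V" "y \<in> V"
  shows "(\<Sum>k\<in>V. if P \<and> k = y then g k else 0) = (if P then g y else (0::'a::comm_monoid_add))"
  using assms by (cases P) (simp_all add: sum.delta)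

lemma mpderiv_Kentry_Some:
  assumes "finite V" "(x,y) \<in> D" "y \<in> V"
  shows "mpderiv (Some (x,y)) (Kentry V D c d :: 'v mpoly) =
    - (mvar None * ((if c = x then Id_entry d y - Lam D d y else 0) + (if d = x then Id_entry c y - Lam D c y else 0)))"
proof -
  have dl: "mpderiv (Some (x,y)) (Id_entry i k - Lam D i k :: 'v mpoly) = - (if i = x \<and> k = y then 1 else 0)" for i k
    using assms(2) by (auto simp: mpderiv_diff mpderiv_Id mpderiv_Lam)
  have "mpderiv (Some (x,y)) (\<Sum>k\<in>V. (Id_entry c k - Lam D c k) * (Id_entry d k - Lam D d k) :: 'v mpoly)
     = (\<Sum>k\<in>V. mpderiv (Some (x,y)) (Id_entry c k - Lam D c k) * (Id_entry d k - Lam D d k)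
          + (Id_entry c k - Lam D c k) * mpderiv (Some (x,y)) (Id_entry d k - Lam D d k))"
    by (simp only: mpderiv_sum[OF assms(1)] mpderiv_mult)
  also have "\<dots> = (\<Sum>k\<in>V. - ((if c = x \<and> k = y then Id_entry d k - Lam D d k else 0) + (if d = x \<and> k = y then Id_entry c k - Lam D c k else 0)))"
    by (rule sum.cong) (auto simp: dl)
  also have "\<dots> = - ((if c = x then Id_entry d y - Lam D d y else 0) + (if d = x then Id_entry c y - Lam D c y else 0))"
    using assms(1,3) by (simp only: sum_negf sum.distrib sum_if_eq)
  finally have S: "mpderiv (Some (x,y)) (\<Sum>k\<in>V. (Id_entry c k - Lam D c k) * (Id_entry d k - Lam D d k) :: 'v mpoly) = - ((if c = x then Id_entry d y - Lam D d y else 0) + (if d = x then Id_entry c y - Lam D c y else 0))" .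
  show ?thesis
    unfolding Kentry_def mpderiv_mult mpderiv_mvar S by (simp add: algebra_simps)
qed

lemma jac_Some_nz:
  assumes "finite V" "simple_digraph V D" "(x,y) \<in> D" "jac V D (Some (x,y)) p \<noteq> 0"
  shows "(fst p = x \<and> (snd p = y \<or> (snd p, y) \<in> D)) \<or> (snd p = x \<and> (fst p = y \<or> (fst p, y) \<in> D))"
proof (rule ccontr)
  assume n: "\<not> ?thesis"
  have yV: "y \<in> V" using assms(2,3) by (auto simp: simple_digraph_def)
  have "mpderiv (Some (x,y)) (Kentry V D (fst p) (snd p)) = 0"
    using n by (simp add: mpderiv_Kentry_Some[OF assms(1,3) yV] Id_entry_def Lam_def)
  then show False using assms(4) by (simp add: jac_def Fract_zero_iff)
qed

lemma jac_Some_pivot: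
  assumes "finite V" "simple_digraph V D" "(x,y) \<in> D"
  shows "jac V D (Some (x,y)) (x,y) \<noteq> 0" "jac V D (Some (x,y)) (y,x) \<noteq> 0"
proof -
  have yV: "y \<in> V" and xy: "x \<noteq> y" and yy: "(y,y) \<notin> D"
    using assms(2,3) by (auto simp: simple_digraph_def)
  have "mpderiv (Some (x,y)) (Kentry V D x y) = - mvar None"
    using xy yy by (simp add: mpderiv_Kentry_Some[OF assms(1,3) yV] Id_entry_def Lam_def)
  then show "jac V D (Some (x,y)) (x,y) \<noteq> 0"
    by (simp add: jac_def Fract_zero_iff mvar_nz)
  have "mpderiv (Some (x,y)) (Kentry V D y x) = - mvar None"
    using xy yy by (simp add: mpderiv_Kentry_Some[OF assms(1,3) yV] Id_entry_def Lam_def)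
  then show "jac V D (Some (x,y)) (y,x) \<noteq> 0"
    by (simp add: jac_def Fract_zero_iff mvar_nz)
qed

lemma jac_None_sink:
  assumes "finite V" "t \<in> V" "\<forall>k. (t,k) \<notin> D"
  shows "jac V D None (t,t) \<noteq> 0"
proof -
  have "mpderiv None (Kentry V D t t) = (\<Sum>k\<in>V. (Id_entry t k - Lam D t k) * (Id_entry t k - Lam D t k))"
    by (rule mpderiv_Kentry_None[OF assms(1)])
  also have "\<dots> = (\<Sum>k\<in>V. if t = k then 1 else 0)"
    using assms(3) by (intro sum.cong) (auto simp: Id_entry_def Lam_def)
  also have "\<dots> = 1" using assms(1,2) by simp
  finally show ?thesis by (simp add: jac_def Fract_zero_iff)
qed

lemma lin_dep:
  fixes M :: "'r \<Rightarrow> 'c \<Rightarrow> 'f::field"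
  assumes "finite R" "finite C" "card R < card C"
  shows "\<exists>a. (\<forall>\<theta>\<in>R. (\<Sum>c\<in>C. a c * M \<theta> c) = 0) \<and> (\<exists>c\<in>C. a c \<noteq> 0)"
  using assms
proof (induction R arbitrary: C M rule: finite_induct)
  case empty
  then obtain c0 where "c0 \<in> C" by fastforce
  then show ?case by (intro exI[of _ "\<lambda>c. if c = c0 then 1 else 0"]) auto
next
  case (insert \<theta> R)
  show ?case
  proof (cases "\<forall>c\<in>C. M \<theta> c = 0")
    case True
    have "card R < card C" using insert by simp
    then obtain a where a: "\<forall>\<theta>\<in>R. (\<Sum>c\<in>C. a c * M \<theta> c) = 0" "\<exists>c\<in>C. a c \<noteq> 0"
      using insert.IH[OF insert.prems(1)] by blast
    show ?thesis using a True by (intro exI[of _ a]) auto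
  next
    case False
    then obtain c0 where c0: "c0 \<in> C" "M \<theta> c0 \<noteq> 0" by blast
    define C' where "C' = C - {c0}"
    define M' where "M' = (\<lambda>\<rho> c. M \<rho> c - (M \<theta> c / M \<theta> c0) * M \<rho> c0)"
    have fC': "finite C'" using insert.prems(1) by (simp add: C'_def)
    have "card C' = card C - 1" using c0 insert.prems(1) by (simp add: C'_def)
    then have "card R < card C'" using insert by simp
    then obtain b where b: "\<forall>\<rho>\<in>R. (\<Sum>c\<in>C'. b c * M' \<rho> c) = 0" "\<exists>c\<in>C'. b c \<noteq> 0"
      using insert.IH[OF fC'] by blast
    define a where "a = (\<lambda>c. if c = c0 then - (\<Sum>c\<in>C'. b c * M \<theta> c) / M \<theta> c0 else b c)"
    have key: "(\<Sum>c\<in>C. a c * M \<rho> c) = (\<Sum>c\<in>C'. b c * M' \<rho> c)" for \<rho>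
    proof -
      have e1: "(\<Sum>c\<in>C. a c * M \<rho> c) = a c0 * M \<rho> c0 + (\<Sum>c\<in>C'. a c * M \<rho> c)"
        using c0 insert.prems(1) unfolding C'_def by (simp add: sum.remove)
      have e2: "(\<Sum>c\<in>C'. a c * M \<rho> c) = (\<Sum>c\<in>C'. b c * M \<rho> c)"
        by (rule sum.cong) (auto simp: a_def C'_def)
      have e3: "(\<Sum>c\<in>C'. b c * M' \<rho> c) = (\<Sum>c\<in>C'. b c * M \<rho> c) - (\<Sum>c\<in>C'. b c * M \<theta> c) / M \<theta> c0 * M \<rho> c0"
        unfolding M'_def by (simp add: algebra_simps sum_subtractf sum_distrib_left sum_distrib_right sum_divide_distrib)
      show ?thesis unfolding e1 e2 e3 by (simp add: a_def)
    qed
    have "\<forall>\<rho>\<in>insert \<theta> R. (\<Sum>c\<in>C. a c * M \<rho> c) = 0"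
    proof
      fix \<rho> assume "\<rho> \<in> insert \<theta> R"
      then show "(\<Sum>c\<in>C. a c * M \<rho> c) = 0"
      proof
        assume "\<rho> = \<theta>"
        then show ?thesis unfolding key using c0 by (simp add: M'_def)
      next
        assume "\<rho> \<in> R" then show ?thesis unfolding key using b by simp
      qed
    qed
    moreover have "\<exists>c\<in>C. a c \<noteq> 0" using b by (auto simp: a_def C'_def)
    ultimately show ?thesis by blast
  qed
qed

lemma tri_indep:
  fixes M :: "'r \<Rightarrow> 'c \<Rightarrow> 'f::field" and r :: "'c \<Rightarrow> nat"
  assumes "finite C" "\<forall>c\<in>C. p c \<in> Rows \<and> M (p c) c \<noteq> 0"
    "\<forall>c\<in>C. \<forall>c'\<in>C. c' \<noteq> c \<and> M (p c) c' \<noteq> 0 \<longrightarrow> r c' < r c"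
    "\<forall>\<theta>\<in>Rows. (\<Sum>c\<in>C. a c * M \<theta> c) = 0"
  shows "\<forall>c\<in>C. a c = 0"
proof -
  have "\<forall>c\<in>C. r c = n \<longrightarrow> a c = 0" for n
  proof (induction n rule: less_induct)
    case (less n)
    show ?case
    proof (intro ballI impI)
      fix c assume c: "c \<in> C" "r c = n"
      have z: "(\<Sum>c'\<in>C - {c}. a c' * M (p c) c') = 0"
      proof (rule sum.neutral, intro ballI)
        fix c' assume c': "c' \<in> C - {c}"
        show "a c' * M (p c) c' = 0"
        proof (cases "M (p c) c' = 0")
          case False
          then have "r c' < n" using assms(3) c c' by auto
          then have "a c' = 0" using less c' by auto
          then show ?thesis by simp
        qed simp
      qed
      have "0 = (\<Sum>c'\<in>C. a c' * M (p c) c')" using assms(4) assms(2) c by auto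
      also have "\<dots> = a c * M (p c) c + (\<Sum>c'\<in>C - {c}. a c' * M (p c) c')"
        using c assms(1) by (simp add: sum.remove)
      finally have "a c * M (p c) c = 0" using z by simp
      then show "a c = 0" using assms(2) c by simp
    qed
  qed
  then show ?thesis by blast
qed

definition ordp :: "'v::linorder \<times> 'v \<Rightarrow> 'v \<times> 'v" where
  "ordp q = (min (fst q) (snd q), max (fst q) (snd q))"

definition touch :: "('v \<times> 'v) set \<Rightarrow> 'v \<Rightarrow> 'v \<Rightarrow> 'v \<times> 'v \<Rightarrow> bool" where
  "touch D x y q \<longleftrightarrow> (fst q = x \<and> (snd q = y \<or> (snd q, y) \<in> D)) \<or> (snd q = x \<and> (fst q = y \<or> (fst q, y) \<in> D))"

lemma ordp_cases: "ordp q = q \<or> ordp q = (snd q, fst q)"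
  by (cases q) (auto simp: ordp_def min_def max_def)

lemma ordp_eq: "ordp q = ordp q' \<Longrightarrow> q = q' \<or> q = (snd q', fst q')"
  by (cases q; cases q') (auto simp: ordp_def min_def max_def split: if_splits)

lemma touch_ordp: "touch D x y (ordp q) = touch D x y q"
  using ordp_cases[of q] by (auto simp: touch_def)

lemma jac_swap: "jac V D \<theta> (b,a) = jac V D \<theta> (a,b)"
proof -
  have "Kentry V D b a = Kentry V D a b" unfolding Kentry_def by (simp add: mult.commute)
  then show ?thesis by (simp add: jac_def)
qed

lemma jac_ordp: "jac V D \<theta> (ordp q) = jac V D \<theta> q"
  using ordp_cases[of q] by (cases q) (auto simp: jac_swap)

lemma jac_touch:
  assumes "finite V" "simple_digraph V D" "(x,y) \<in> D" "jac V D (Some (x,y)) q \<noteq> 0"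
  shows "touch D x y q"
  using jac_Some_nz[OF assms] by (simp add: touch_def)

lemma key:
  fixes V :: "'v::linorder set" and G H :: "('v \<times> 'v) set"
  assumes fin: "finite V" and sG: "simple_digraph V G" and sH: "simple_digraph V H"
    and AV: "A \<subseteq> V" and vV: "v \<in> V" and vA: "v \<notin> A"
    and same: "\<forall>a\<in>A. children G a = children H a"
    and clos: "\<forall>a\<in>A. children G a \<subseteq> A"
    and acyc: "acyclic (G \<inter> A \<times> A)"
    and lt: "card (children H v \<inter> A) < card (children G v \<inter> A)"
  shows "\<exists>C\<subseteq>jac_cols V. jac_indep V G C \<and> \<not> jac_indep V H C"
proof -
  define E where "E = G \<inter> A \<times> A"
  have finA: "finite A" using fin AV finite_subset by blast
  have GA: "(a,b) \<in> G \<Longrightarrow> a \<in> A \<Longrightarrow> b \<in> A" for a b using clos by (auto simp: children_def)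
  have HG: "a \<in> A \<Longrightarrow> (a,b) \<in> H \<longleftrightarrow> (a,b) \<in> G" for a b using same by (auto simp: children_def set_eq_iff)
  have HA: "(a,b) \<in> H \<Longrightarrow> a \<in> A \<Longrightarrow> b \<in> A" for a b using GA HG by blast
  have EG: "(a,b) \<in> E \<longleftrightarrow> (a,b) \<in> G \<and> a \<in> A \<and> b \<in> A" for a b by (simp add: E_def)
  have EH: "(a,b) \<in> E \<longleftrightarrow> (a,b) \<in> H \<and> a \<in> A" for a b using EG HG HA GA by blast
  have finE: "finite E" using finA by (simp add: E_def finite_subset[of _ "A \<times> A"])
  have Gsimp: "(a,b) \<in> G \<Longrightarrow> a \<noteq> b \<and> (b,a) \<notin> G \<and> a \<in> V \<and> b \<in> V" for a b
    using sG by (auto simp: simple_digraph_def)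
  have Hsimp: "(a,b) \<in> H \<Longrightarrow> a \<noteq> b \<and> (b,a) \<notin> H \<and> a \<in> V \<and> b \<in> V" for a b
    using sH by (auto simp: simple_digraph_def)
  define W where "W = children G v \<inter> A"
  have finW: "finite W" using finA by (simp add: W_def)
  have WG: "w \<in> W \<longleftrightarrow> (v,w) \<in> G \<and> w \<in> A" for w by (auto simp: W_def children_def)
  have "W \<noteq> {}" using lt by (auto simp: W_def)
  then have Ane: "A \<noteq> {}" by (auto simp: W_def)
  define h where "h b = card {a\<in>A. (a,b) \<in> E\<^sup>+}" for b
  have h_lt: "h a < h b" if ab: "(a,b) \<in> E" for a b
  proof -
    have sub: "{a'\<in>A. (a',a) \<in> E\<^sup>+} \<subseteq> {a'\<in>A. (a',b) \<in> E\<^sup>+}"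
      using ab by (auto intro: trancl_into_trancl)
    have "a \<in> {a'\<in>A. (a',b) \<in> E\<^sup>+}" using ab EG by auto
    moreover have "a \<notin> {a'\<in>A. (a',a) \<in> E\<^sup>+}" using acyc by (auto simp: E_def acyclic_def)
    ultimately have "{a'\<in>A. (a',a) \<in> E\<^sup>+} \<subset> {a'\<in>A. (a',b) \<in> E\<^sup>+}" using sub by blast
    then show ?thesis unfolding h_def by (rule psubset_card_mono[rotated]) (use finA in auto)
  qed
  have h_bd: "h a < card A" if "a \<in> A" for a
  proof -
    have "{a'\<in>A. (a',a) \<in> E\<^sup>+} \<subseteq> A - {a}" using acyc by (auto simp: E_def acyclic_def)
    then have "h a \<le> card (A - {a})" unfolding h_def by (intro card_mono) (use finA in auto)
    also have "\<dots> < card A" by (rule card_Diff1_less[OF finA that])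
    finally show ?thesis .
  qed
  have "Max (h ` A) \<in> h ` A" using finA Ane by simp
  then obtain t where tA: "t \<in> A" and tmax: "h t = Max (h ` A)" by auto
  have tsink: "(t,k) \<notin> G" for k
  proof
    assume tk: "(t,k) \<in> G"
    then have "(t,k) \<in> E" using GA tA EG by blast
    then have "h t < h k" by (rule h_lt)
    moreover have "h k \<le> h t" using tmax GA[OF tk tA] finA by simp
    ultimately show False by simp
  qed
  have tsinkH: "(t,k) \<notin> H" for k using tsink HG tA by blast
  define Q where "Q = insert (t,t) (E \<union> Pair v ` W)"
  define C where "C = ordp ` Q"
  have finQ: "finite Q" using finE finW by (simp add: Q_def)
  have finC: "finite C" using finQ by (simp add: C_def)
  have injQ: "inj_on ordp Q"
  proof (rule inj_onI)
    fix q q' assume q: "q \<in> Q" "q' \<in> Q" "ordp q = ordp q'"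
    have "q = q' \<or> q = (snd q', fst q')" by (rule ordp_eq[OF q(3)])
    then show "q = q'"
    proof
      assume sw: "q = (snd q', fst q')"
      show "q = q'" using q(1,2) sw vA tA WG EG Gsimp unfolding Q_def by (cases q') auto
    qed
  qed
  have cardQ: "card Q = 1 + card E + card W"
  proof -
    have d1: "(t,t) \<notin> E \<union> Pair v ` W" using EG Gsimp tA vA by auto
    have d2: "E \<inter> Pair v ` W = {}" using EG vA by auto
    have "card (Pair v ` W) = card W" by (rule card_image) (auto simp: inj_on_def)
    then show ?thesis unfolding Q_def using d1 d2 finE finW by (simp add: card_Un_disjoint)
  qed
  have cardC: "card C = 1 + card E + card W" unfolding C_def using card_image[OF injQ] cardQ by simp
  have QV: "q \<in> Q \<Longrightarrow> fst q \<in> V \<and> snd q \<in> V" for q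
    using tA AV vV EG WG Gsimp unfolding Q_def by (cases q) auto
  have CV: "C \<subseteq> jac_cols V"
    using QV by (auto simp: C_def jac_cols_def ordp_def min_def max_def)
  define p where "p q = (if q = (t,t) then None else if fst q = v then Some (v, snd q) else Some q)" for q :: "'v \<times> 'v"
  define r where "r q = (if q = (t,t) then 2 * card A + 1 else if fst q = v then h (snd q) else card A + h (snd q))" for q
  define pc where "pc c = p (inv_into Q ordp c)" for c
  define rc where "rc c = r (inv_into Q ordp c)" for c
  have inv: "q \<in> Q \<Longrightarrow> inv_into Q ordp (ordp q) = q" for q using injQ by simp
  have indG: "jac_indep V G C"
  proof -
    have "\<forall>c\<in>C. a c = 0" if hyp: "\<forall>\<theta>\<in>jac_rows G. (\<Sum>c\<in>C. a c * jac V G \<theta> c) = 0" for a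
    proof (rule tri_indep[where p = pc and r = rc and Rows = "jac_rows G"])
      show "finite C" by (rule finC)
      show "\<forall>\<theta>\<in>jac_rows G. (\<Sum>c\<in>C. a c * jac V G \<theta> c) = 0" by (rule hyp)
      show "\<forall>c\<in>C. pc c \<in> jac_rows G \<and> jac V G (pc c) c \<noteq> 0"
      proof
        fix c assume "c \<in> C"
        then obtain q where q: "q \<in> Q" "c = ordp q" by (auto simp: C_def)
        have pcq: "pc c = p q" using q inv by (simp add: pc_def)
        show "pc c \<in> jac_rows G \<and> jac V G (pc c) c \<noteq> 0"
        proof (cases "q = (t,t)")
          case True
          then show ?thesis using q pcq jac_None_sink[OF fin _ ] tA AV tsink
            by (auto simp: p_def jac_rows_def jac_ordp)
        next
          case False
          then have "q \<in> E \<or> q \<in> Pair v ` W" using q by (simp add: Q_def)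
          then show ?thesis
          proof
            assume qE: "q \<in> E"
            then have "fst q \<noteq> v" using EG vA by (cases q) auto
            then have "pc c = Some q" using pcq False by (simp add: p_def)
            then show ?thesis using qE EG jac_Some_pivot(1)[OF fin sG, of "fst q" "snd q"] q
              by (cases q) (auto simp: jac_rows_def jac_ordp)
          next
            assume "q \<in> Pair v ` W"
            then obtain w where w: "w \<in> W" "q = (v,w)" by auto
            then have "(v,t) \<noteq> (t,t)" using tA vA by auto
            then have "pc c = Some (v,w)" using pcq w False by (simp add: p_def)
            then show ?thesis using w WG jac_Some_pivot(1)[OF fin sG, of v w] q
              by (auto simp: jac_rows_def jac_ordp)
          qed
        qed
      qed
      show "\<forall>c\<in>C. \<forall>c'\<in>C. c' \<noteq> c \<and> jac V G (pc c) c' \<noteq> 0 \<longrightarrow> rc c' < rc c"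
      proof (intro ballI impI)
        fix c c' assume cC: "c \<in> C" and cC': "c' \<in> C" and nz: "c' \<noteq> c \<and> jac V G (pc c) c' \<noteq> 0"
        obtain q where q: "q \<in> Q" "c = ordp q" using cC by (auto simp: C_def)
        obtain q' where q': "q' \<in> Q" "c' = ordp q'" using cC' by (auto simp: C_def)
        have qq: "q' \<noteq> q" using nz q q' by auto
        have pcq: "pc c = p q" and rcq: "rc c = r q" "rc c' = r q'" using q q' inv by (auto simp: pc_def rc_def)
        have nz': "jac V G (p q) q' \<noteq> 0" using nz pcq q' by (simp add: jac_ordp)
        have r_small: "r x < 2 * card A + 1" if "x \<in> Q" "x \<noteq> (t,t)" for x
        proof -
          have "x \<in> E \<or> x \<in> Pair v ` W" using that by (simp add: Q_def)
          then show ?thesis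
          proof
            assume "x \<in> E"
            then show ?thesis using EG vA h_bd[of "snd x"] that(2) by (cases x) (auto simp: r_def)
          next
            assume "x \<in> Pair v ` W"
            then obtain w where w: "w \<in> W" "x = (v,w)" by auto
            then have "h w < card A" using h_bd WG by auto
            then show ?thesis using w that(2) tA vA by (auto simp: r_def)
          qed
        qed
        show "rc c' < rc c"
        proof (cases "q = (t,t)")
          case True
          then show ?thesis using rcq r_small[OF q'(1)] qq by (simp add: r_def)
        next
          case False
          then have "q \<in> E \<or> q \<in> Pair v ` W" using q by (simp add: Q_def)
          then show ?thesis
          proof
            assume qE: "q \<in> E"
            obtain a b where ab: "q = (a,b)" by (cases q)
            have aA: "a \<in> A" "b \<in> A" "(a,b) \<in> G" using qE ab EG by auto
            have "a \<noteq> v" using aA vA by auto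
            then have pq: "p q = Some (a,b)" and rq: "r q = card A + h b"
              using False ab by (auto simp: p_def r_def)
            have tch: "touch G a b q'" using jac_touch[OF fin sG aA(3)] nz' pq by simp
            have "q' \<noteq> (t,t)"
            proof
              assume "q' = (t,t)"
              then show False using tch tsink Gsimp aA by (auto simp: touch_def)
            qed
            then have "q' \<in> E \<or> q' \<in> Pair v ` W" using q' by (simp add: Q_def)
            then show ?thesis
            proof
              assume q'E: "q' \<in> E"
              obtain a' b' where ab': "q' = (a',b')" by (cases q')
              have aA': "a' \<in> A" "b' \<in> A" "(a',b') \<in> G" using q'E ab' EG by auto
              have "a' \<noteq> v" using aA' vA by auto
              then have rq': "r q' = card A + h b'" using ab' \<open>q' \<noteq> (t,t)\<close> by (auto simp: r_def)
              have "h b' < h b"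
              proof -
                from tch consider "a' = a" "b' = b" | "a' = a" "(b',b) \<in> G" | "b' = a" "a' = b"
                  | "b' = a" "(a',b) \<in> G" using ab' by (auto simp: touch_def)
                then show ?thesis
                proof cases
                  case 1 then show ?thesis using qq ab ab' by simp
                next
                  case 2 then have "(b',b) \<in> E" using EG aA aA' by simp
                  then show ?thesis by (rule h_lt)
                next
                  case 3 then show ?thesis using aA aA' Gsimp by auto
                next
                  case 4 then show ?thesis using h_lt[of a b] EG aA by simp
                qed
              qed
              then show ?thesis using rcq rq rq' by simp
            next
              assume "q' \<in> Pair v ` W"
              then obtain w where w: "w \<in> W" "q' = (v,w)" by auto
              then have "h w < card A" using h_bd WG by auto
              then show ?thesis using w rcq rq \<open>q' \<noteq> (t,t)\<close> by (auto simp: r_def)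
            qed
          next
            assume "q \<in> Pair v ` W"
            then obtain w where w: "w \<in> W" "q = (v,w)" by auto
            have wG: "(v,w) \<in> G" "w \<in> A" using w WG by auto
            have pq: "p q = Some (v,w)" and rq: "r q = h w" using False w by (auto simp: p_def r_def)
            have tch: "touch G v w q'" using jac_touch[OF fin sG wG(1)] nz' pq by simp
            have "q' \<noteq> (t,t)" using tch tA vA by (auto simp: touch_def)
            then have "q' \<in> E \<or> q' \<in> Pair v ` W" using q' by (simp add: Q_def)
            then show ?thesis
            proof
              assume "q' \<in> E"
              then show ?thesis using tch EG vA by (cases q') (auto simp: touch_def)
            next
              assume "q' \<in> Pair v ` W"
              then obtain w' where w': "w' \<in> W" "q' = (v,w')" by auto
              have "h w' < h w"
                using tch w w' qq WG EG h_lt[of w' w] vA by (auto simp: touch_def)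
              then show ?thesis using rcq rq w' \<open>q' \<noteq> (t,t)\<close> by (auto simp: r_def)
            qed
          qed
        qed
      qed
    qed
    then show ?thesis using CV by (auto simp: jac_indep_def)
  qed
  define R where "R = insert None (Some ` (E \<union> Pair v ` (children H v \<inter> A)))"
  have finR: "finite R" using finE finA by (simp add: R_def)
  define S where "S = E \<union> Pair v ` (children H v \<inter> A)"
  have finS: "finite S" using finE finA by (simp add: S_def)
  have "card R = Suc (card S)" unfolding R_def S_def[symmetric] using finS
    by (simp add: card_image)
  also have "card S \<le> card E + card (children H v \<inter> A)"
    unfolding S_def using card_Un_le[of E "Pair v ` (children H v \<inter> A)"] card_image_le[of "children H v \<inter> A" "Pair v"] finA
    by simp
  then have "card R < card C" using \<open>card R = Suc (card S)\<close> cardC lt by (simp add: W_def)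
  then obtain a where a0: "\<forall>\<theta>\<in>R. (\<Sum>c\<in>C. a c * jac V H \<theta> c) = 0" and a1: "\<exists>c\<in>C. a c \<noteq> 0"
    using lin_dep[OF finR finC] by blast
  have "(\<Sum>c\<in>C. a c * jac V H \<theta> c) = 0" if \<theta>: "\<theta> \<in> jac_rows H" for \<theta>
  proof (cases "\<theta> \<in> R")
    case True then show ?thesis using a0 by blast
  next
    case False
    then obtain x y where xy: "\<theta> = Some (x,y)" "(x,y) \<in> H" using \<theta> by (auto simp: R_def jac_rows_def)
    have "jac V H \<theta> c = 0" if cC: "c \<in> C" for c
    proof (rule ccontr)
      assume "jac V H \<theta> c \<noteq> 0"
      then have tc: "touch H x y c" using jac_touch[OF fin sH xy(2)] xy(1) by simp
      obtain q where q: "q \<in> Q" "c = ordp q" using cC by (auto simp: C_def)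
      have tq: "touch H x y q" using tc q touch_ordp by metis
      have "x \<in> A \<Longrightarrow> \<theta> \<in> R" using xy EH by (auto simp: R_def)
      moreover have "x = v \<Longrightarrow> y \<in> A \<Longrightarrow> \<theta> \<in> R" using xy by (auto simp: R_def children_def)
      moreover have "x \<in> A \<or> (x = v \<and> y \<in> A)"
      proof -
        have "q = (t,t) \<or> q \<in> E \<or> q \<in> Pair v ` W" using q(1) by (auto simp: Q_def)
        then show ?thesis
        proof (elim disjE)
          assume "q = (t,t)" then show ?thesis using tq tA by (auto simp: touch_def)
        next
          assume "q \<in> E" then show ?thesis using tq EG by (cases q) (auto simp: touch_def)
        next
          assume "q \<in> Pair v ` W"
          then obtain w where w: "w \<in> W" "q = (v,w)" by auto
          then have wA: "w \<in> A" using WG by auto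
          show ?thesis using tq w wA HA[of w y] by (auto simp: touch_def)
        qed
      qed
      ultimately show False using False by blast
    qed
    then show ?thesis by simp
  qed
  then have "\<not> jac_indep V H C" using a1 by (auto simp: jac_indep_def)
  then show ?thesis using CV indG by blast
qed

lemma main_acyc:
  fixes V :: "'v::linorder set" and D1 D2 :: "('v \<times> 'v) set"
  assumes fin: "finite V"
    and s1: "simple_digraph V D1" and s2: "simple_digraph V D2"
    and ne: "D1 \<noteq> D2"
    and deg: "\<forall>v\<in>V. card (children D1 v) = card (children D2 v)"
    and ac: "acyclic D1"
  shows "\<exists>C \<subseteq> jac_cols V. jac_indep V D1 C \<noteq> jac_indep V D2 C"
proof -
  have D1V: "D1 \<subseteq> V \<times> V" and D2V: "D2 \<subseteq> V \<times> V" using s1 s2 by (auto simp: simple_digraph_def)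
  have trV: "(a,b) \<in> D1\<^sup>+ \<Longrightarrow> a \<in> V \<and> b \<in> V" for a b
  proof (induction rule: trancl.induct)
    case (r_into_trancl a b) then show ?case using D1V by auto
  next
    case (trancl_into_trancl a b c) then show ?case using D1V by auto
  qed
  define X where "X = {u\<in>V. children D1 u \<noteq> children D2 u}"
  have "X \<noteq> {}"
  proof
    assume X0: "X = {}"
    have "D1 = D2"
    proof (intro set_eqI iffI)
      fix e assume "e \<in> D1"
      then obtain a b where e: "e = (a,b)" "(a,b) \<in> D1" "a \<in> V" using D1V by (cases e) auto
      then have "children D1 a = children D2 a" using X0 by (auto simp: X_def)
      then show "e \<in> D2" using e by (auto simp: children_def set_eq_iff)
    next
      fix e assume "e \<in> D2"
      then obtain a b where e: "e = (a,b)" "(a,b) \<in> D2" "a \<in> V" using D2V by (cases e) auto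
      then have "children D1 a = children D2 a" using X0 by (auto simp: X_def)
      then show "e \<in> D1" using e by (auto simp: children_def set_eq_iff)
    qed
    then show False using ne by simp
  qed
  have finX: "finite X" using fin by (simp add: X_def)
  define anc where "anc u = card {a\<in>V. (a,u) \<in> D1\<^sup>+}" for u
  have anc_lt: "anc u < anc u'" if uu: "(u,u') \<in> D1\<^sup>+" for u u'
  proof -
    have sub: "{a\<in>V. (a,u) \<in> D1\<^sup>+} \<subseteq> {a\<in>V. (a,u') \<in> D1\<^sup>+}" using uu by (auto intro: trancl_trans)
    have "u \<in> {a\<in>V. (a,u') \<in> D1\<^sup>+}" using uu trV by auto
    moreover have "u \<notin> {a\<in>V. (a,u) \<in> D1\<^sup>+}" using ac by (auto simp: acyclic_def)
    ultimately have "{a\<in>V. (a,u) \<in> D1\<^sup>+} \<subset> {a\<in>V. (a,u') \<in> D1\<^sup>+}" using sub by blast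
    then show ?thesis unfolding anc_def by (rule psubset_card_mono[rotated]) (use fin in auto)
  qed
  have "Max (anc ` X) \<in> anc ` X" using finX \<open>X \<noteq> {}\<close> by simp
  then obtain v where vX: "v \<in> X" and vmax: "anc v = Max (anc ` X)" by auto
  have vV: "v \<in> V" using vX by (simp add: X_def)
  define L where "L = {u. (v,u) \<in> D1\<^sup>+}"
  have Lsame: "children D1 u = children D2 u" if "u \<in> L" for u
  proof (rule ccontr)
    assume "children D1 u \<noteq> children D2 u"
    moreover have "u \<in> V" using that trV by (auto simp: L_def)
    ultimately have "u \<in> X" by (simp add: X_def)
    then have "anc u \<le> anc v" using vmax finX by simp
    moreover have "anc v < anc u" using that anc_lt by (simp add: L_def)
    ultimately show False by simp
  qed
  define Dl where "Dl = {x\<in>L. (x \<in> children D1 v) \<noteq> (x \<in> children D2 v)}"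
  have "Dl \<noteq> {}"
  proof
    assume Dl0: "Dl = {}"
    have "children D1 v \<subseteq> L" by (auto simp: children_def L_def)
    then have sub: "children D1 v \<subseteq> children D2 v" using Dl0 by (auto simp: Dl_def)
    have "finite (children D2 v)" using fin D2V by (auto intro: finite_subset[of _ V] simp: children_def)
    then have "children D1 v = children D2 v"
      using card_subset_eq[OF _ sub] deg vV by simp
    then show False using vX by (simp add: X_def)
  qed
  have finDl: "finite Dl" using fin trV by (auto intro: finite_subset[of _ V] simp: Dl_def L_def)
  have "Max (anc ` Dl) \<in> anc ` Dl" using finDl \<open>Dl \<noteq> {}\<close> by simp
  then obtain w where wDl: "w \<in> Dl" and wmax: "anc w = Max (anc ` Dl)" by auto
  define A where "A = insert w {u. (w,u) \<in> D1\<^sup>+}"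
  have wL: "w \<in> L" using wDl by (simp add: Dl_def)
  have AL: "A \<subseteq> L" using wL by (auto simp: A_def L_def intro: trancl_trans)
  have AV: "A \<subseteq> V" using AL trV by (auto simp: L_def)
  have vA: "v \<notin> A" using AL ac by (auto simp: L_def acyclic_def)
  have same: "\<forall>a\<in>A. children D1 a = children D2 a" using AL Lsame by auto
  have clos: "\<forall>a\<in>A. children D1 a \<subseteq> A"
    by (auto simp: A_def children_def intro: trancl_into_trancl)
  have acA: "acyclic (D1 \<inter> A \<times> A)" using ac acyclic_subset by blast
  have eqA: "D2 \<inter> A \<times> A = D1 \<inter> A \<times> A" using same by (auto simp: children_def set_eq_iff)
  have other: "(a \<in> children D1 v) = (a \<in> children D2 v)" if "a \<in> A" "a \<noteq> w" for a
  proof (rule ccontr)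
    assume "(a \<in> children D1 v) \<noteq> (a \<in> children D2 v)"
    then have "a \<in> Dl" using AL that by (auto simp: Dl_def)
    then have "anc a \<le> anc w" using wmax finDl by simp
    moreover have "(w,a) \<in> D1\<^sup>+" using that by (simp add: A_def)
    then have "anc w < anc a" by (rule anc_lt)
    ultimately show False by simp
  qed
  have wA: "w \<in> A" by (simp add: A_def)
  have finch: "finite (S \<inter> A)" for S :: "'v set"
    using AV fin by (meson finite_Int finite_subset)
  show ?thesis
  proof (cases "w \<in> children D1 v")
    case True
    then have w2: "w \<notin> children D2 v" using wDl by (simp add: Dl_def)
    have eq: "children D1 v \<inter> A = insert w (children D2 v \<inter> A)" using True w2 other wA by auto
    have "card (children D2 v \<inter> A) < card (children D1 v \<inter> A)"
      unfolding eq using w2 finch[of "children D2 v"] by simp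
    then obtain C where "C \<subseteq> jac_cols V" "jac_indep V D1 C" "\<not> jac_indep V D2 C"
      using key[OF fin s1 s2 AV vV vA same clos acA] by blast
    then show ?thesis by blast
  next
    case False
    then have w2: "w \<in> children D2 v" using wDl by (simp add: Dl_def)
    have eq: "children D2 v \<inter> A = insert w (children D1 v \<inter> A)" using False w2 other wA by auto
    have "card (children D1 v \<inter> A) < card (children D2 v \<inter> A)"
      unfolding eq using False finch[of "children D1 v"] by simp
    moreover have "\<forall>a\<in>A. children D2 a = children D1 a" using same by simp
    moreover have "\<forall>a\<in>A. children D2 a \<subseteq> A" using same clos by simp
    moreover have "acyclic (D2 \<inter> A \<times> A)" using acA eqA by simp
    ultimately obtain C where "C \<subseteq> jac_cols V" "jac_indep V D2 C" "\<not> jac_indep V D1 C"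
      using key[OF fin s2 s1 AV vV vA] by blast
    then show ?thesis by blast
  qed
qed

theorem corollary4p14:
  fixes V :: "'v::linorder set" and D1 D2 :: "('v \<times> 'v) set"
  assumes "finite V"
    and "simple_digraph V D1" and "simple_digraph V D2"
    and "D1 \<noteq> D2"
    and "\<forall>v\<in>V. card (children D1 v) = card (children D2 v)"
    and "acyclic D1 \<or> acyclic D2"
  shows "\<exists>C \<subseteq> jac_cols V. jac_indep V D1 C \<noteq> jac_indep V D2 C"
proof (cases "acyclic D1")
  case True
  then show ?thesis using main_acyc[OF assms(1-5)] by blast
next
  case False
  then have "acyclic D2" using assms(6) by simp
  then obtain C where "C \<subseteq> jac_cols V" "jac_indep V D2 C \<noteq> jac_indep V D1 C"
    using main_acyc[OF assms(1) assms(3) assms(2)] assms(4,5) by fastforce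
  then show ?thesis by metis
qed

end
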